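(* Let $0<\eta<2^{-11}$. Every interval $I\subseteq\mathbb{R}$ of length $7\eta$ contains a sub-interval $J\subseteq I$ of length $\eta$ such that $|\mathrm{Re}(H(x))|\ge \eta^3/2^7$ for every $x\in J$. Moreover, if $I=[a,a+7\eta]$ then one can take $J=[a+j\eta,a+(j+1)\eta]$ for some $j\in\{0,1,\dots,6\}$.
   Context: Rudin–Shapiro polynomials: $P_0(z)=Q_0(z)=1$ and for $s\ge0$, $P_{s+1}(z)=P_s(z)+z^{2^s}Q_s(z)$, $Q_{s+1}(z)=P_s(z)-z^{2^s}Q_s(z)$. Let $t$ be an odd positive integer and $T:=2^{t+10}$. For $x\in\mathbb{R}$ define $\alpha(x):=2^{-(t+1)/2}P_t(e^{ix/T})$, $\beta(x):=2^{-(t+1)/2}Q_t(e^{ix/T})$, and $H(x):=e^{ix}\alpha(x)+e^{2ix}\beta(x)$. *)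

theory Defs
  imports "HOL-Analysis.Analysis"
begin

text \<open>Rudin--Shapiro polynomials, evaluated as functions: RS s z = (P_s(z), Q_s(z)).\<close>
fun RS :: "nat \<Rightarrow> complex \<Rightarrow> complex \<times> complex" where
  "RS 0 z = (1, 1)"
| "RS (Suc s) z = (fst (RS s z) + z ^ (2 ^ s) * snd (RS s z),
                   fst (RS s z) - z ^ (2 ^ s) * snd (RS s z))"

definition RS_P :: "nat \<Rightarrow> complex \<Rightarrow> complex" where
  "RS_P s z = fst (RS s z)"

definition RS_Q :: "nat \<Rightarrow> complex \<Rightarrow> complex" where
  "RS_Q s z = snd (RS s z)"

definition Tpar :: "nat \<Rightarrow> real" where
  "Tpar t = 2 ^ (t + 10)"

definition alpha :: "nat \<Rightarrow> real \<Rightarrow> complex" where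
  "alpha t x = complex_of_real (2 powr (- (real t + 1) / 2)) * RS_P t (cis (x / Tpar t))"

definition beta :: "nat \<Rightarrow> real \<Rightarrow> complex" where
  "beta t x = complex_of_real (2 powr (- (real t + 1) / 2)) * RS_Q t (cis (x / Tpar t))"

definition H :: "nat \<Rightarrow> real \<Rightarrow> complex" where
  "H t x = cis x * alpha t x + cis (2 * x) * beta t x"

definition ivl_length :: "real set \<Rightarrow> real" where
  "ivl_length I = Sup I - Inf I"

end

theory Submission
  imports Defs "HOL-Complex_Analysis.Complex_Analysis"
begin


lemma RS_P_Suc: "RS_P (Suc s) z = RS_P s z + z^(2^s) * RS_Q s z"
  by (simp add: RS_P_def RS_Q_def)
lemma RS_Q_Suc: "RS_Q (Suc s) z = RS_P s z - z^(2^s) * RS_Q s z"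
  by (simp add: RS_P_def RS_Q_def)
lemma RS_0: "RS_P 0 z = 1" "RS_Q 0 z = 1"
  by (simp_all add: RS_P_def RS_Q_def)

lemma para: "(cmod (a + b))^2 + (cmod (a - b))^2 = 2 * ((cmod a)^2 + (cmod b)^2)"
  by (simp only: cmod_power2) (simp add: power2_eq_square algebra_simps)

lemma RS_growth:
  "(cmod (RS_P s z))^2 + (cmod (RS_Q s z))^2 \<le> 2^(s+1) * (max 1 (cmod z))^(2*2^s)"
proof (induction s)
  case 0 then show ?case by (simp add: RS_0)
next
  case (Suc s)
  define m where "m = max 1 (cmod z)"
  have m1: "m \<ge> 1" by (simp add: m_def)
  have zm: "cmod z \<le> m" by (simp add: m_def)
  have e: "(cmod (RS_P (Suc s) z))^2 + (cmod (RS_Q (Suc s) z))^2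
      = 2 * ((cmod (RS_P s z))^2 + (cmod z ^ (2^s))^2 * (cmod (RS_Q s z))^2)"
    unfolding RS_P_Suc RS_Q_Suc para by (simp add: norm_mult norm_power power_mult_distrib)
  have "(cmod z ^ (2^s))^2 \<le> m ^ (2 * 2^s)"
    by (metis norm_ge_zero power_mono power_mult zm mult.commute)
  moreover have "1 \<le> m ^ (2 * 2^s)" using m1 by simp
  ultimately have "(cmod (RS_P s z))^2 + (cmod z ^ (2^s))^2 * (cmod (RS_Q s z))^2
     \<le> m ^ (2 * 2^s) * ((cmod (RS_P s z))^2 + (cmod (RS_Q s z))^2)"
  proof -
    have "(cmod (RS_P s z))^2 \<le> m ^ (2 * 2^s) * (cmod (RS_P s z))^2"
      using \<open>1 \<le> m ^ (2 * 2^s)\<close> by (simp add: mult_le_cancel_right1)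
    moreover have "(cmod z ^ (2^s))^2 * (cmod (RS_Q s z))^2 \<le> m ^ (2 * 2^s) * (cmod (RS_Q s z))^2"
      using \<open>(cmod z ^ (2^s))^2 \<le> m ^ (2 * 2^s)\<close> by (simp add: mult_right_mono)
    ultimately show ?thesis by (simp add: distrib_left)
  qed
  also have "\<dots> \<le> m ^ (2 * 2^s) * (2^(s+1) * m^(2*2^s))"
    using Suc.IH m1 unfolding m_def by (intro mult_left_mono) auto
  finally show ?case unfolding e m_def[symmetric]
    by (simp add: power_add[symmetric] algebra_simps)
qed

lemma RS_unit:
  assumes "cmod z = 1"
  shows "(cmod (RS_P s z))^2 + (cmod (RS_Q s z))^2 = 2^(s+1)"
proof (induction s)
  case 0 then show ?case by (simp add: RS_0)
next
  case (Suc s)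
  show ?case
    unfolding RS_P_Suc RS_Q_Suc para using Suc.IH assms by (simp add: norm_mult norm_power)
qed

lemma RS_holo: "RS_P s holomorphic_on S \<and> RS_Q s holomorphic_on S"
proof (induction s)
  case 0 then show ?case by (simp add: RS_0)
next
  case (Suc s)
  then show ?case unfolding RS_P_Suc[abs_def] RS_Q_Suc[abs_def]
    by (auto intro!: holomorphic_intros)
qed

definition cc :: "nat \<Rightarrow> real" where "cc t = 2 powr (- (real t + 1) / 2)"
definition ac :: "nat \<Rightarrow> complex \<Rightarrow> complex" where
  "ac t w = of_real (cc t) * RS_P t (exp (\<i> * w / of_real (Tpar t)))"
definition bc :: "nat \<Rightarrow> complex \<Rightarrow> complex" where
  "bc t w = of_real (cc t) * RS_Q t (exp (\<i> * w / of_real (Tpar t)))"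
definition Hc :: "nat \<Rightarrow> complex \<Rightarrow> complex" where
  "Hc t w = exp (\<i> * w) * ac t w + exp (2 * \<i> * w) * bc t w"

lemma cc_sq: "(cc t)^2 * 2^(t+1) = 1"
proof -
  have a: "(cc t)^2 = 2 powr (- (real t + 1))"
    unfolding cc_def by (simp add: powr_powr[symmetric] powr_mult_base power2_eq_square powr_add[symmetric])
  have b: "(2::real)^(t+1) = 2 powr (real t + 1)" by (subst powr_realpow[symmetric]) (auto simp: add.commute)
  have c: "2 powr (- (real t + 1)) * 2 powr (real t + 1) = (1::real)" by (subst powr_add[symmetric]) simp
  show ?thesis by (simp only: a b c)
qed

lemma alpha_ac: "alpha t x = ac t (of_real x)"
  by (simp add: alpha_def ac_def cc_def cis_conv_exp)
lemma beta_bc: "beta t x = bc t (of_real x)"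
  by (simp add: beta_def bc_def cc_def cis_conv_exp)
lemma H_Hc: "H t x = Hc t (of_real x)"
  by (simp add: H_def Hc_def alpha_ac beta_bc cis_conv_exp mult.assoc mult.left_commute)

lemma ac_holo: "ac t holomorphic_on S" and bc_holo: "bc t holomorphic_on S"
proof -
  have "(RS_P t \<circ> (\<lambda>w. exp (\<i> * w / of_real (Tpar t)))) holomorphic_on S"
    using RS_holo[of t UNIV] by (intro holomorphic_on_compose) (auto intro!: holomorphic_intros intro: holomorphic_on_subset)
  then have "(\<lambda>w. RS_P t (exp (\<i> * w / of_real (Tpar t)))) holomorphic_on S" by (simp add: o_def)
  then show "ac t holomorphic_on S" unfolding ac_def[abs_def] by (auto intro!: holomorphic_intros)
  have "(RS_Q t \<circ> (\<lambda>w. exp (\<i> * w / of_real (Tpar t)))) holomorphic_on S"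
    using RS_holo[of t UNIV] by (intro holomorphic_on_compose) (auto intro!: holomorphic_intros intro: holomorphic_on_subset)
  then have "(\<lambda>w. RS_Q t (exp (\<i> * w / of_real (Tpar t)))) holomorphic_on S" by (simp add: o_def)
  then show "bc t holomorphic_on S" unfolding bc_def[abs_def] by (auto intro!: holomorphic_intros)
qed

lemma Hc_holo: "Hc t holomorphic_on S"
  unfolding Hc_def[abs_def] using ac_holo bc_holo by (auto intro!: holomorphic_intros)

lemma Tpar_pos: "Tpar t > 0" by (simp add: Tpar_def)

lemma ab_bound:
  assumes "\<bar>Im w\<bar> \<le> R"
  shows "(cmod (ac t w))^2 + (cmod (bc t w))^2 \<le> exp (R / 512)"
proof -
  define z where "z = exp (\<i> * w / of_real (Tpar t))"
  have nz: "cmod z = exp (- Im w / Tpar t)"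
    unfolding z_def norm_exp_eq_Re by (simp add: Re_divide_of_real)
  have R0: "R \<ge> 0" using assms by simp
  have "- Im w \<le> R" using assms by simp
  then have "- Im w / Tpar t \<le> R / Tpar t" using Tpar_pos[of t] by (intro divide_right_mono) auto
  then have "max 1 (cmod z) \<le> exp (R / Tpar t)"
    unfolding nz using R0 Tpar_pos[of t] by auto
  then have "(max 1 (cmod z))^(2*2^t) \<le> exp (R / Tpar t) ^ (2*2^t)"
    by (intro power_mono) auto
  also have "\<dots> = exp (R / 512)"
    unfolding exp_of_nat_mult[symmetric] by (simp add: Tpar_def power_add)
  finally have m: "(max 1 (cmod z))^(2*2^t) \<le> exp (R / 512)" .
  have "(cmod (ac t w))^2 + (cmod (bc t w))^2 = (cc t)^2 * ((cmod (RS_P t z))^2 + (cmod (RS_Q t z))^2)"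
    unfolding ac_def bc_def z_def by (simp add: norm_mult power_mult_distrib algebra_simps)
  also have "\<dots> \<le> (cc t)^2 * (2^(t+1) * (max 1 (cmod z))^(2*2^t))"
    by (intro mult_left_mono RS_growth) auto
  also have "\<dots> = (max 1 (cmod z))^(2*2^t)" using cc_sq[of t] by (simp add: algebra_simps)
  finally show ?thesis using m by linarith
qed

lemma ab_unit:
  assumes "w \<in> \<real>"
  shows "(cmod (ac t w))^2 + (cmod (bc t w))^2 = 1"
proof -
  define z where "z = exp (\<i> * w / of_real (Tpar t))"
  have nz: "cmod z = 1"
    unfolding z_def norm_exp_eq_Re using assms by (auto simp: Re_divide_of_real elim!: Reals_cases)
  have "(cmod (ac t w))^2 + (cmod (bc t w))^2 = (cc t)^2 * ((cmod (RS_P t z))^2 + (cmod (RS_Q t z))^2)"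
    unfolding ac_def bc_def z_def by (simp add: norm_mult power_mult_distrib algebra_simps)
  also have "\<dots> = 1" using RS_unit[OF nz] cc_sq[of t] by simp
  finally show ?thesis .
qed

lemma exp2_le: "exp (2::real) \<le> 9"
proof -
  have "exp (2::real) = exp 1 ^ 2" by (simp add: exp_of_nat_mult[symmetric])
  also have "\<dots> \<le> 3 ^ 2" using exp_le by (intro power_mono) auto
  finally show ?thesis by simp
qed

lemma ab_norm_bound:
  assumes "\<bar>Im w\<bar> \<le> 1024"
  shows "cmod (ac t w) \<le> 3" "cmod (bc t w) \<le> 3"
proof -
  have "exp (1024 / 512) \<le> (9::real)" using exp2_le by simp
  then have h: "(cmod (ac t w))^2 + (cmod (bc t w))^2 \<le> 3^2"
    using ab_bound[OF assms, of t] by simp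
  then have "(cmod (ac t w))^2 \<le> 3^2" by (smt (verit) zero_le_power2)
  then show "cmod (ac t w) \<le> 3" by (rule power2_le_imp_le) simp
  from h have "(cmod (bc t w))^2 \<le> 3^2" by (smt (verit) zero_le_power2)
  then show "cmod (bc t w) \<le> 3" by (rule power2_le_imp_le) simp
qed

lemma deriv_bound_gen:
  assumes holf: "f holomorphic_on UNIV"
    and bd: "\<And>w. \<bar>Im w\<bar> \<le> 1024 \<Longrightarrow> cmod (f w) \<le> 3"
    and z: "\<bar>Im z\<bar> \<le> 2"
  shows "cmod (deriv f z) \<le> 3 / 512"
proof -
  have "norm ((deriv ^^ 1) f z) \<le> (fact 1) * 3 / 512^1"
  proof (rule Cauchy_inequality)
    show "f holomorphic_on ball z 512" using holf by (rule holomorphic_on_subset) auto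
    show "continuous_on (cball z 512) f"
      using holomorphic_on_imp_continuous_on[OF holf] by (rule continuous_on_subset) auto
    fix x assume "norm (z - x) = 512"
    then have "\<bar>Im z - Im x\<bar> \<le> 512" using abs_Im_le_cmod[of "z - x"] by simp
    then show "norm (f x) \<le> 3" using z by (intro bd) linarith
  qed simp
  then show ?thesis by simp
qed

lemma lip_gen:
  assumes holf: "f holomorphic_on UNIV"
    and bd: "\<And>w. \<bar>Im w\<bar> \<le> 1024 \<Longrightarrow> cmod (f w) \<le> 3"
    and y: "Im y = 0" and w: "w \<in> cball y 2"
  shows "cmod (f w - f y) \<le> 3 / 512 * cmod (w - y)"
proof (rule field_differentiable_bound[of "cball y 2" f "deriv f"])
  show "convex (cball y 2)" by simp
  fix z assume z: "z \<in> cball y 2"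
  show "(f has_field_derivative deriv f z) (at z within cball y 2)"
    using holf by (rule holomorphic_derivI) auto
  have "\<bar>Im y - Im z\<bar> \<le> 2" using abs_Im_le_cmod[of "y - z"] z by (simp add: dist_norm)
  then show "cmod (deriv f z) \<le> 3 / 512" using y by (intro deriv_bound_gen[OF holf bd]) auto
qed (use w in auto)

lemma Gc_higher:
  "(deriv ^^ k) (\<lambda>w. A * exp (\<i> * w) + B * exp (2 * \<i> * w))
     = (\<lambda>w. \<i>^k * A * exp (\<i> * w) + (2 * \<i>)^k * B * exp (2 * \<i> * w))"
proof (induction k)
  case 0 then show ?case by simp
next
  case (Suc k)
  have "deriv (\<lambda>w. \<i>^k * A * exp (\<i> * w) + (2 * \<i>)^k * B * exp (2 * \<i> * w)) z
      = \<i>^Suc k * A * exp (\<i> * z) + (2 * \<i>)^Suc k * B * exp (2 * \<i> * z)" for z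
    by (rule DERIV_imp_deriv) (auto intro!: derivative_eq_intros simp: algebra_simps)
  then show ?case unfolding funpow.simps o_def Suc.IH by (intro ext) blast
qed

definition Ec :: "nat \<Rightarrow> real \<Rightarrow> complex \<Rightarrow> complex" where
  "Ec t a w = Hc t w - (ac t (of_real a) * exp (\<i> * w) + bc t (of_real a) * exp (2 * \<i> * w))"

lemma Ec_holo: "Ec t a holomorphic_on S"
  unfolding Ec_def[abs_def] using Hc_holo by (auto intro!: holomorphic_intros)

lemma Hc_split:
  "(deriv ^^ k) (Hc t) z = \<i>^k * ac t (of_real a) * exp (\<i> * z)
     + (2 * \<i>)^k * bc t (of_real a) * exp (2 * \<i> * z) + (deriv ^^ k) (Ec t a) z"
proof -
  have "(deriv ^^ k) (Ec t a) z = (deriv ^^ k) (Hc t) z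
     - (deriv ^^ k) (\<lambda>w. ac t (of_real a) * exp (\<i> * w) + bc t (of_real a) * exp (2 * \<i> * w)) z"
    unfolding Ec_def[abs_def]
    by (rule higher_deriv_diff[of _ UNIV]) (auto intro!: holomorphic_intros Hc_holo)
  then show ?thesis unfolding Gc_higher by simp
qed

lemma Ec_bound:
  assumes "\<bar>x - a\<bar> \<le> 1/100"
  shows "cmod ((deriv ^^ k) (Ec t a) (of_real x)) \<le> fact k / 12"
proof -
  have "norm ((deriv ^^ k) (Ec t a) (of_real x)) \<le> (fact k) * (1/12) / 1^k"
  proof (rule Cauchy_inequality)
    show "Ec t a holomorphic_on ball (of_real x) 1" by (rule Ec_holo)
    show "continuous_on (cball (of_real x) 1) (Ec t a)"
      using holomorphic_on_imp_continuous_on[OF Ec_holo] .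
    fix w :: complex assume w: "norm (of_real x - w) = (1::real)"
    have imw: "\<bar>Im w\<bar> \<le> 1" using abs_Im_le_cmod[of "of_real x - w"] w by simp
    have dwa: "cmod (w - of_real a) \<le> 101/100"
    proof -
      have "cmod (w - of_real a) \<le> cmod (w - of_real x) + cmod (of_real x - of_real a :: complex)"
        by (rule order_trans[OF _ norm_triangle_ineq]) simp
      also have "\<dots> \<le> 1 + 1/100" using w assms
        by (simp add: norm_minus_commute flip: of_real_diff)
      finally show ?thesis by simp
    qed
    then have wb: "w \<in> cball (of_real a) 2" by (simp add: dist_norm norm_minus_commute)
    have bdA: "\<And>w::complex. \<bar>Im w\<bar> \<le> 1024 \<Longrightarrow> cmod (ac t w) \<le> 3" using ab_norm_bound by blast
    have bdB: "\<And>w::complex. \<bar>Im w\<bar> \<le> 1024 \<Longrightarrow> cmod (bc t w) \<le> 3" using ab_norm_bound by blast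
    have "cmod (ac t w - ac t (of_real a)) \<le> 3/512 * cmod (w - of_real a)"
      by (rule lip_gen[OF ac_holo]) (use wb in \<open>auto intro: bdA\<close>)
    then have la: "cmod (ac t w - ac t (of_real a)) \<le> 3/512 * (101/100)"
      using dwa by linarith
    have "cmod (bc t w - bc t (of_real a)) \<le> 3/512 * cmod (w - of_real a)"
      by (rule lip_gen[OF bc_holo]) (use wb in \<open>auto intro: bdB\<close>)
    then have lb: "cmod (bc t w - bc t (of_real a)) \<le> 3/512 * (101/100)"
      using dwa by linarith
    have e1: "cmod (exp (\<i> * w)) \<le> 3"
    proof -
      have "cmod (exp (\<i> * w)) = exp (- Im w)" by simp
      also have "\<dots> \<le> exp 1" using imw by simp
      finally show ?thesis using exp_le by linarith
    qed
    have e2: "cmod (exp (2 * \<i> * w)) \<le> 9"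
    proof -
      have "cmod (exp (2 * \<i> * w)) = exp (- 2 * Im w)" by simp
      also have "\<dots> \<le> exp 2" using imw by simp
      finally show ?thesis using exp2_le by linarith
    qed
    have "Ec t a w = exp (\<i> * w) * (ac t w - ac t (of_real a)) + exp (2 * \<i> * w) * (bc t w - bc t (of_real a))"
      unfolding Ec_def Hc_def by (simp add: algebra_simps)
    then have "cmod (Ec t a w) \<le> cmod (exp (\<i> * w)) * cmod (ac t w - ac t (of_real a))
        + cmod (exp (2 * \<i> * w)) * cmod (bc t w - bc t (of_real a))"
      by (metis norm_mult norm_triangle_ineq)
    also have "\<dots> \<le> 3 * (3/512 * (101/100)) + 9 * (3/512 * (101/100))"
      by (intro add_mono mult_mono e1 e2 la lb) auto
    also have "\<dots> \<le> 1/12" by simp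
    finally show "norm (Ec t a w) \<le> 1/12" .
  qed simp
  then show ?thesis by simp
qed



lemma rolle0:
  fixes h h' :: "real \<Rightarrow> real"
  assumes "a < b" "\<And>x. (h has_real_derivative h' x) (at x)" "h a = 0" "h b = 0"
  shows "\<exists>z. a < z \<and> z < b \<and> h' z = 0"
proof -
  obtain z where "a < z" "z < b" "h b - h a = (b - a) * h' z"
    using MVT2[of a b h h'] assms by blast
  then show ?thesis using assms by auto
qed

definition q3 :: "real \<Rightarrow> real \<Rightarrow> real \<Rightarrow> real \<Rightarrow> real" where
  "q3 a b c x = (x - a) * (x - b) * (x - c)"

lemma q3_d1: "(q3 a b c has_real_derivative (3*x^2 - 2*(a+b+c)*x + (a*b+b*c+c*a))) (at x)"
  unfolding q3_def[abs_def] by (auto intro!: derivative_eq_intros simp: algebra_simps power2_eq_square)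
lemma q3_d2: "((\<lambda>x. 3*x^2 - 2*(a+b+c)*x + (a*b+b*c+c*a)) has_real_derivative (6*x - 2*(a+b+c))) (at x)"
  by (auto intro!: derivative_eq_intros simp: algebra_simps power2_eq_square)
lemma q3_d3: "((\<lambda>x. 6*x - 2*(a+b+c)) has_real_derivative 6) (at x)"
  by (auto intro!: derivative_eq_intros)

lemma dd3:
  fixes f0 f1 f2 f3 :: "real \<Rightarrow> real"
  assumes lt: "x0 < x1" "x1 < x2" "x2 < x3"
    and d1: "\<And>x. (f0 has_real_derivative f1 x) (at x)"
    and d2: "\<And>x. (f1 has_real_derivative f2 x) (at x)"
    and d3: "\<And>x. (f2 has_real_derivative f3 x) (at x)"
  shows "\<exists>\<xi>. x0 < \<xi> \<and> \<xi> < x3 \<and> f3 \<xi> = 6 * (f0 x0 / q3 x1 x2 x3 x0 + f0 x1 / q3 x0 x2 x3 x1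
           + f0 x2 / q3 x0 x1 x3 x2 + f0 x3 / q3 x0 x1 x2 x3)"
proof -
  define c0 where "c0 = f0 x0 / q3 x1 x2 x3 x0"
  define c1 where "c1 = f0 x1 / q3 x0 x2 x3 x1"
  define c2 where "c2 = f0 x2 / q3 x0 x1 x3 x2"
  define c3 where "c3 = f0 x3 / q3 x0 x1 x2 x3"
  define p1 where "p1 = (\<lambda>a b c x::real. 3*x^2 - 2*(a+b+c)*x + (a*b+b*c+c*a))"
  define p2 where "p2 = (\<lambda>a b c x::real. 6*x - 2*(a+b+c))"
  define h0 where "h0 = (\<lambda>x. f0 x - (c0 * q3 x1 x2 x3 x + c1 * q3 x0 x2 x3 x + c2 * q3 x0 x1 x3 x + c3 * q3 x0 x1 x2 x))"
  define h1 where "h1 = (\<lambda>x. f1 x - (c0 * p1 x1 x2 x3 x + c1 * p1 x0 x2 x3 x + c2 * p1 x0 x1 x3 x + c3 * p1 x0 x1 x2 x))"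
  define h2 where "h2 = (\<lambda>x. f2 x - (c0 * p2 x1 x2 x3 x + c1 * p2 x0 x2 x3 x + c2 * p2 x0 x1 x3 x + c3 * p2 x0 x1 x2 x))"
  define h3 where "h3 = (\<lambda>x. f3 x - (c0 * 6 + c1 * 6 + c2 * 6 + c3 * 6))"
  have D1: "(h0 has_real_derivative h1 x) (at x)" for x
    unfolding h0_def h1_def p1_def
    by (intro DERIV_diff DERIV_add DERIV_cmult d1 q3_d1)
  have D2: "(h1 has_real_derivative h2 x) (at x)" for x
    unfolding h1_def h2_def p1_def p2_def
    by (intro DERIV_diff DERIV_add DERIV_cmult d2 q3_d2)
  have D3: "(h2 has_real_derivative h3 x) (at x)" for x
    unfolding h2_def h3_def p2_def
    by (intro DERIV_diff DERIV_add DERIV_cmult d3 q3_d3)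
  have nz: "q3 x1 x2 x3 x0 \<noteq> 0" "q3 x0 x2 x3 x1 \<noteq> 0" "q3 x0 x1 x3 x2 \<noteq> 0" "q3 x0 x1 x2 x3 \<noteq> 0"
    using lt by (auto simp: q3_def)
  have z: "h0 x0 = 0" "h0 x1 = 0" "h0 x2 = 0" "h0 x3 = 0"
    using nz by (simp_all add: h0_def c0_def c1_def c2_def c3_def q3_def)
  obtain y1 where y1: "x0 < y1" "y1 < x1" "h1 y1 = 0" using rolle0[OF lt(1) D1 z(1) z(2)] by blast
  obtain y2 where y2: "x1 < y2" "y2 < x2" "h1 y2 = 0" using rolle0[OF lt(2) D1 z(2) z(3)] by blast
  obtain y3 where y3: "x2 < y3" "y3 < x3" "h1 y3 = 0" using rolle0[OF lt(3) D1 z(3) z(4)] by blast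
  have "y1 < y2" "y2 < y3" using y1 y2 y3 by linarith+
  obtain z1 where z1: "y1 < z1" "z1 < y2" "h2 z1 = 0" using rolle0[OF \<open>y1 < y2\<close> D2 y1(3) y2(3)] by blast
  obtain z2 where z2: "y2 < z2" "z2 < y3" "h2 z2 = 0" using rolle0[OF \<open>y2 < y3\<close> D2 y2(3) y3(3)] by blast
  have "z1 < z2" using z1 z2 by linarith
  obtain \<xi> where xi: "z1 < \<xi>" "\<xi> < z2" "h3 \<xi> = 0" using rolle0[OF \<open>z1 < z2\<close> D3 z1(3) z2(3)] by blast
  show ?thesis
    using xi y1 y3 z1 z2 unfolding h3_def c0_def c1_def c2_def c3_def
    by (intro exI[of _ \<xi>]) (auto simp: algebra_simps)
qed

definition q2 :: "real \<Rightarrow> real \<Rightarrow> real \<Rightarrow> real" where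
  "q2 a b x = (x - a) * (x - b)"

lemma dd2:
  fixes f0 f1 f2 :: "real \<Rightarrow> real"
  assumes lt: "x0 < x1" "x1 < x2"
    and d1: "\<And>x. (f0 has_real_derivative f1 x) (at x)"
    and d2: "\<And>x. (f1 has_real_derivative f2 x) (at x)"
  shows "\<exists>\<xi>. x0 < \<xi> \<and> \<xi> < x2 \<and> f2 \<xi> = 2 * (f0 x0 / q2 x1 x2 x0 + f0 x1 / q2 x0 x2 x1
           + f0 x2 / q2 x0 x1 x2)"
proof -
  define c0 where "c0 = f0 x0 / q2 x1 x2 x0"
  define c1 where "c1 = f0 x1 / q2 x0 x2 x1"
  define c2 where "c2 = f0 x2 / q2 x0 x1 x2"
  define h0 where "h0 = (\<lambda>x. f0 x - (c0 * q2 x1 x2 x + c1 * q2 x0 x2 x + c2 * q2 x0 x1 x))"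
  define h1 where "h1 = (\<lambda>x. f1 x - (c0 * (2*x - x1 - x2) + c1 * (2*x - x0 - x2) + c2 * (2*x - x0 - x1)))"
  define h2 where "h2 = (\<lambda>x. f2 x - (c0 * 2 + c1 * 2 + c2 * 2))"
  have D1: "(h0 has_real_derivative h1 x) (at x)" for x
    unfolding h0_def h1_def q2_def
    by (auto intro!: derivative_eq_intros d1 simp: algebra_simps)
  have D2: "(h1 has_real_derivative h2 x) (at x)" for x
    unfolding h1_def h2_def
    by (auto intro!: derivative_eq_intros d2 simp: algebra_simps)
  have nz: "q2 x1 x2 x0 \<noteq> 0" "q2 x0 x2 x1 \<noteq> 0" "q2 x0 x1 x2 \<noteq> 0"
    using lt by (auto simp: q2_def)
  have z: "h0 x0 = 0" "h0 x1 = 0" "h0 x2 = 0"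
    using nz by (simp_all add: h0_def c0_def c1_def c2_def q2_def)
  obtain y1 where y1: "x0 < y1" "y1 < x1" "h1 y1 = 0" using rolle0[OF lt(1) D1 z(1) z(2)] by blast
  obtain y2 where y2: "x1 < y2" "y2 < x2" "h1 y2 = 0" using rolle0[OF lt(2) D1 z(2) z(3)] by blast
  have "y1 < y2" using y1 y2 by linarith
  obtain \<xi> where xi: "y1 < \<xi>" "\<xi> < y2" "h2 \<xi> = 0" using rolle0[OF \<open>y1 < y2\<close> D2 y1(3) y2(3)] by blast
  show ?thesis
    using xi y1 y2 unfolding h2_def c0_def c1_def c2_def
    by (intro exI[of _ \<xi>]) (auto simp: algebra_simps)
qed



lemma Re_deriv:
  assumes "(f has_field_derivative f') (at (of_real x))"
  shows "((\<lambda>x. Re (f (of_real x))) has_real_derivative Re f') (at x)"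
proof -
  have "((\<lambda>x. f (of_real x)) has_vector_derivative f') (at x)"
    by (rule has_vector_derivative_real_field[OF assms])
  then have "((\<lambda>x. f (of_real x)) has_derivative (\<lambda>h. h *\<^sub>R f')) (at x)"
    by (simp add: has_vector_derivative_def)
  then have "((\<lambda>x. Re (f (of_real x))) has_derivative (\<lambda>h. Re (h *\<^sub>R f'))) (at x)"
    by (rule has_derivative_Re)
  moreover have "(\<lambda>h. Re (h *\<^sub>R f')) = (*) (Re f')" by (auto simp: fun_eq_iff)
  ultimately show ?thesis by (simp add: has_field_derivative_def)
qed

definition gk :: "nat \<Rightarrow> nat \<Rightarrow> real \<Rightarrow> real" where
  "gk t k x = Re ((deriv ^^ k) (Hc t) (of_real x))"

lemma gk_deriv: "(gk t k has_real_derivative gk t (Suc k) x) (at x)"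
proof -
  have "((deriv ^^ k) (Hc t) has_field_derivative deriv ((deriv ^^ k) (Hc t)) (of_real x)) (at (of_real x))"
    by (rule holomorphic_derivI[of _ UNIV]) (auto intro!: holomorphic_higher_deriv Hc_holo)
  then show ?thesis unfolding gk_def[abs_def] by (simp add: Re_deriv)
qed

lemma gk0: "gk t 0 x = Re (H t x)" by (simp add: gk_def H_Hc)

lemma exp_lip:
  assumes "y0 \<le> (y::real)"
  shows "\<bar>Re (c * exp (\<i> * of_real y)) - Re (c * exp (\<i> * of_real y0))\<bar> \<le> cmod c * (y - y0)"
proof (cases "y0 = y")
  case True then show ?thesis by simp
next
  case False
  then have lt: "y0 < y" using assms by simp
  have d: "((\<lambda>x. Re (c * exp (\<i> * of_real x))) has_real_derivative Re (c * \<i> * exp (\<i> * of_real x))) (at x)" for x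
    by (rule Re_deriv[where f="\<lambda>w. c * exp (\<i> * w)"]) (auto intro!: derivative_eq_intros)
  obtain z where "Re (c * exp (\<i> * of_real y)) - Re (c * exp (\<i> * of_real y0)) = (y - y0) * Re (c * \<i> * exp (\<i> * of_real z))"
    using MVT2[OF lt d] by blast
  moreover have "\<bar>Re (c * \<i> * exp (\<i> * of_real z))\<bar> \<le> cmod c"
    using abs_Re_le_cmod[of "c * \<i> * exp (\<i> * of_real z)"] by (simp add: norm_mult)
  ultimately show ?thesis using lt by (simp add: abs_mult mult.commute mult_left_mono)
qed

lemma G_lip:
  assumes "y0 \<le> (y::real)" "cmod A \<le> 1" "cmod B \<le> 1"
  shows "\<bar>Re (\<i>^k * A * exp (\<i> * of_real y) + (2*\<i>)^k * B * exp (2 * \<i> * of_real y))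
        - Re (\<i>^k * A * exp (\<i> * of_real y0) + (2*\<i>)^k * B * exp (2 * \<i> * of_real y0))\<bar>
        \<le> (1 + 2^(k+1)) * (y - y0)"
proof -
  have e2: "exp (2 * \<i> * of_real u) = exp (\<i> * of_real (2 * u))" for u :: real by (simp add: mult.commute mult.left_commute)
  have l1: "\<bar>Re (\<i>^k * A * exp (\<i> * of_real y)) - Re (\<i>^k * A * exp (\<i> * of_real y0))\<bar> \<le> cmod (\<i>^k * A) * (y - y0)"
    by (rule exp_lip[OF assms(1)])
  have l2: "\<bar>Re ((2*\<i>)^k * B * exp (\<i> * of_real (2*y))) - Re ((2*\<i>)^k * B * exp (\<i> * of_real (2*y0)))\<bar> \<le> cmod ((2*\<i>)^k * B) * (2*y - 2*y0)"
    by (rule exp_lip) (use assms in auto)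
  have n1: "cmod (\<i>^k * A) \<le> 1" using assms by (simp add: norm_mult norm_power)
  have n2: "cmod ((2*\<i>)^k * B) \<le> 2^k" using assms by (simp add: norm_mult norm_power mult_left_le)
  have "cmod (\<i>^k * A) * (y - y0) \<le> 1 * (y - y0)" using n1 assms by (intro mult_right_mono) auto
  moreover have "cmod ((2*\<i>)^k * B) * (2*y - 2*y0) \<le> 2^k * (2*y - 2*y0)" using n2 assms by (intro mult_right_mono) auto
  ultimately show ?thesis using l1 l2 unfolding e2 by (simp add: algebra_simps)
qed

lemma final_alg:
  fixes ra ia rb ib :: real
  assumes "ra^2 + ia^2 + rb^2 + ib^2 = 1"
    "\<bar>ra + rb\<bar> \<le> 1/8" "\<bar>- ia - 2*ib\<bar> \<le> 1/8" "\<bar>- ra - 4*rb\<bar> \<le> 1/4" "\<bar>ia + 8*ib\<bar> \<le> 2/3"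
  shows False
proof -
  have "\<bar>ra\<bar> \<le> 1/4" "\<bar>rb\<bar> \<le> 1/8" "\<bar>ia\<bar> \<le> 2/5" "\<bar>ib\<bar> \<le> 1/7" using assms(2-5) by linarith+
  then have "ra^2 \<le> (1/4)^2" "rb^2 \<le> (1/8)^2" "ia^2 \<le> (2/5)^2" "ib^2 \<le> (1/7)^2"
    by (metis abs_ge_zero power2_abs power_mono)+
  then have "ra^2 \<le> 1/16" "rb^2 \<le> 1/64" "ia^2 \<le> 4/25" "ib^2 \<le> 1/49"
    by (simp_all add: power_divide)
  then show False using assms(1) by linarith
qed



lemma q3_lb:
  assumes "\<bar>x - a\<bar> \<ge> d1" "\<bar>x - b\<bar> \<ge> d2" "\<bar>x - c\<bar> \<ge> d3" "d1 \<ge> 0" "d2 \<ge> 0" "d3 \<ge> 0"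
  shows "\<bar>q3 a b c x\<bar> \<ge> d1 * d2 * d3"
  unfolding q3_def abs_mult using assms by (intro mult_mono) (auto intro: mult_nonneg_nonneg)

lemma q2_lb:
  assumes "\<bar>x - a\<bar> \<ge> d1" "\<bar>x - b\<bar> \<ge> d2" "d1 \<ge> 0" "d2 \<ge> 0"
  shows "\<bar>q2 a b x\<bar> \<ge> d1 * d2"
  unfolding q2_def abs_mult using assms by (intro mult_mono) auto

lemma frac_bd:
  fixes u q e m :: real
  assumes "\<bar>u\<bar> \<le> e" "0 < m" "m \<le> \<bar>q\<bar>"
  shows "\<bar>u / q\<bar> \<le> e / m"
proof -
  have "\<bar>u / q\<bar> = \<bar>u\<bar> / \<bar>q\<bar>" by (simp add: abs_divide)
  also have "\<dots> \<le> e / \<bar>q\<bar>" using assms by (intro divide_right_mono) auto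
  also have "\<dots> \<le> e / m" using assms by (intro divide_left_mono) (auto intro: order_trans[OF abs_ge_zero assms(1)])
  finally show ?thesis .
qed

lemma transfer:
  assumes "a \<le> \<xi>" "\<xi> - a \<le> 1/100" "\<bar>gk t k \<xi>\<bar> \<le> s"
  shows "\<bar>Re (\<i>^k * ac t (of_real a) * exp (\<i> * of_real a) + (2*\<i>)^k * bc t (of_real a) * exp (2 * \<i> * of_real a))\<bar>
    \<le> s + fact k / 12 + (1 + 2^(k+1)) * (\<xi> - a)"
proof -
  define A where "A = ac t (of_real a)"
  define B where "B = bc t (of_real a)"
  have u: "(cmod A)^2 + (cmod B)^2 = 1" unfolding A_def B_def by (rule ab_unit) simp
  have nA: "cmod A \<le> 1"
  proof -
    have "(cmod A)^2 \<le> 1" using u zero_le_power2[of "cmod B"] by linarith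
    then have "(cmod A)^2 \<le> 1^2" by simp
    then show ?thesis by (rule power2_le_imp_le) simp
  qed
  have nB: "cmod B \<le> 1"
  proof -
    have "(cmod B)^2 \<le> 1" using u zero_le_power2[of "cmod A"] by linarith
    then have "(cmod B)^2 \<le> 1^2" by simp
    then show ?thesis by (rule power2_le_imp_le) simp
  qed
  have sp: "gk t k \<xi> = Re (\<i>^k * A * exp (\<i> * of_real \<xi>) + (2*\<i>)^k * B * exp (2 * \<i> * of_real \<xi>))
      + Re ((deriv ^^ k) (Ec t a) (of_real \<xi>))"
    unfolding gk_def A_def B_def by (subst Hc_split[of k t _ a]) simp
  have e: "\<bar>Re ((deriv ^^ k) (Ec t a) (of_real \<xi>))\<bar> \<le> fact k / 12"
  proof -
    have "cmod ((deriv ^^ k) (Ec t a) (of_real \<xi>)) \<le> fact k / 12"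
      by (rule Ec_bound) (use assms in auto)
    then show ?thesis using abs_Re_le_cmod[of "(deriv ^^ k) (Ec t a) (of_real \<xi>)"] by linarith
  qed
  have l: "\<bar>Re (\<i>^k * A * exp (\<i> * of_real \<xi>) + (2*\<i>)^k * B * exp (2 * \<i> * of_real \<xi>))
        - Re (\<i>^k * A * exp (\<i> * of_real a) + (2*\<i>)^k * B * exp (2 * \<i> * of_real a))\<bar>
        \<le> (1 + 2^(k+1)) * (\<xi> - a)"
    by (rule G_lip[OF assms(1) nA nB])
  show ?thesis using sp e l assms(3) unfolding A_def[symmetric] B_def[symmetric] by linarith
qed



lemma abs4:
  fixes p q r s :: real
  assumes "\<bar>p\<bar> \<le> P" "\<bar>q\<bar> \<le> Q" "\<bar>r\<bar> \<le> R" "\<bar>s\<bar> \<le> S"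
  shows "\<bar>p+q+r+s\<bar> \<le> P+Q+R+S"
  using assms by arith

lemma abs3:
  fixes p q r :: real
  assumes "\<bar>p\<bar> \<le> P" "\<bar>q\<bar> \<le> Q" "\<bar>r\<bar> \<le> R"
  shows "\<bar>p+q+r\<bar> \<le> P+Q+R"
  using assms by arith

lemma scale_bd:
  fixes X Y k c d :: real
  shows "X = k * Y \<Longrightarrow> Y \<le> c \<Longrightarrow> 0 \<le> k \<Longrightarrow> k * c \<le> d \<Longrightarrow> X \<le> d"
  by (metis mult_left_mono order_trans)

lemma core:
  assumes eta: "0 < \<eta>" "\<eta> \<le> 1/2048"
    and pts: "\<forall>j::nat. j \<le> 6 \<longrightarrow> (\<exists>x\<in>{a + real j * \<eta> .. a + (real j + 1) * \<eta>}. \<bar>Re (H t x)\<bar> < \<eta>^3/2^7)"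
  shows False
proof -
  define \<epsilon> where "\<epsilon> = \<eta>^3/2^7"
  have P: "\<And>j. j \<le> 6 \<Longrightarrow> \<exists>x. a + real j*\<eta> \<le> x \<and> x \<le> a + (real j+1)*\<eta> \<and> \<bar>gk t 0 x\<bar> < \<epsilon>"
  proof -
    fix j :: nat assume "j \<le> 6"
    then obtain x where "x \<in> {a + real j * \<eta> .. a + (real j + 1) * \<eta>}" "\<bar>Re (H t x)\<bar> < \<eta>^3/2^7"
      using pts by blast
    then show "\<exists>x. a + real j*\<eta> \<le> x \<and> x \<le> a + (real j+1)*\<eta> \<and> \<bar>gk t 0 x\<bar> < \<epsilon>"
      by (auto simp: gk0 \<epsilon>_def)
  qed
  obtain x0 where x0: "a \<le> x0" "x0 \<le> a + \<eta>" "\<bar>gk t 0 x0\<bar> < \<epsilon>" using P[of 0] by auto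
  obtain x2 where x2: "a + 2*\<eta> \<le> x2" "x2 \<le> a + 3*\<eta>" "\<bar>gk t 0 x2\<bar> < \<epsilon>" using P[of 2] by auto
  obtain x3 where x3: "a + 3*\<eta> \<le> x3" "x3 \<le> a + 4*\<eta>" "\<bar>gk t 0 x3\<bar> < \<epsilon>" using P[of 3] by auto
  obtain x4 where x4: "a + 4*\<eta> \<le> x4" "x4 \<le> a + 5*\<eta>" "\<bar>gk t 0 x4\<bar> < \<epsilon>" using P[of 4] by auto
  obtain x6 where x6: "a + 6*\<eta> \<le> x6" "x6 \<le> a + 7*\<eta>" "\<bar>gk t 0 x6\<bar> < \<epsilon>" using P[of 6] by auto
  have ep: "\<epsilon> > 0" using eta by (simp add: \<epsilon>_def)
  have e3: "0 < \<eta>^3" using eta by simp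
  obtain \<xi>3 where xi3: "x0 < \<xi>3" "\<xi>3 < x6"
    "gk t 3 \<xi>3 = 6 * (gk t 0 x0 / q3 x2 x4 x6 x0 + gk t 0 x2 / q3 x0 x4 x6 x2
           + gk t 0 x4 / q3 x0 x2 x6 x4 + gk t 0 x6 / q3 x0 x2 x4 x6)"
    using dd3[of x0 x2 x4 x6 "gk t 0" "gk t 1" "gk t 2" "gk t 3"] x0 x2 x4 x6 eta
    by (auto simp: gk_deriv numeral_eq_Suc)
  have b30: "\<bar>gk t 0 x0 / q3 x2 x4 x6 x0\<bar> \<le> \<epsilon> / (\<eta> * (3*\<eta>) * (5*\<eta>))"
    by (rule frac_bd[OF _ _ q3_lb]) (use x0 x2 x4 x6 eta in auto)
  have b31: "\<bar>gk t 0 x2 / q3 x0 x4 x6 x2\<bar> \<le> \<epsilon> / (\<eta> * \<eta> * (3*\<eta>))"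
    by (rule frac_bd[OF _ _ q3_lb]) (use x0 x2 x4 x6 eta in auto)
  have b32: "\<bar>gk t 0 x4 / q3 x0 x2 x6 x4\<bar> \<le> \<epsilon> / ((3*\<eta>) * \<eta> * \<eta>)"
    by (rule frac_bd[OF _ _ q3_lb]) (use x0 x2 x4 x6 eta in auto)
  have b33: "\<bar>gk t 0 x6 / q3 x0 x2 x4 x6\<bar> \<le> \<epsilon> / ((5*\<eta>) * (3*\<eta>) * \<eta>)"
    by (rule frac_bd[OF _ _ q3_lb]) (use x0 x2 x4 x6 eta in auto)
  have n1: "\<epsilon> / (\<eta> * (3*\<eta>) * (5*\<eta>)) = 1/1920" "\<epsilon> / (\<eta> * \<eta> * (3*\<eta>)) = 1/384"
     "\<epsilon> / ((3*\<eta>) * \<eta> * \<eta>) = 1/384" "\<epsilon> / ((5*\<eta>) * (3*\<eta>) * \<eta>) = 1/1920"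
    using eta by (simp_all add: \<epsilon>_def field_simps power3_eq_cube)
  have G3: "\<bar>gk t 3 \<xi>3\<bar> \<le> 3/80"
  proof -
    have "\<bar>gk t 3 \<xi>3\<bar> = 6 * \<bar>gk t 0 x0 / q3 x2 x4 x6 x0 + gk t 0 x2 / q3 x0 x4 x6 x2
           + gk t 0 x4 / q3 x0 x2 x6 x4 + gk t 0 x6 / q3 x0 x2 x4 x6\<bar>"
      by (simp only: xi3(3) abs_mult abs_numeral)
    then show ?thesis using abs4[OF b30 b31 b32 b33] unfolding n1 by (rule scale_bd) simp_all
  qed
  obtain \<xi>2 where xi2: "x0 < \<xi>2" "\<xi>2 < x6"
    "gk t 2 \<xi>2 = 2 * (gk t 0 x0 / q2 x3 x6 x0 + gk t 0 x3 / q2 x0 x6 x3 + gk t 0 x6 / q2 x0 x3 x6)"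
    using dd2[of x0 x3 x6 "gk t 0" "gk t 1" "gk t 2"] x0 x3 x6 eta
    by (auto simp: gk_deriv numeral_eq_Suc)
  have b20: "\<bar>gk t 0 x0 / q2 x3 x6 x0\<bar> \<le> \<epsilon> / ((2*\<eta>) * (5*\<eta>))"
    by (rule frac_bd[OF _ _ q2_lb]) (use x0 x3 x6 eta in auto)
  have b21: "\<bar>gk t 0 x3 / q2 x0 x6 x3\<bar> \<le> \<epsilon> / ((2*\<eta>) * (2*\<eta>))"
    by (rule frac_bd[OF _ _ q2_lb]) (use x0 x3 x6 eta in auto)
  have b22: "\<bar>gk t 0 x6 / q2 x0 x3 x6\<bar> \<le> \<epsilon> / ((5*\<eta>) * (2*\<eta>))"
    by (rule frac_bd[OF _ _ q2_lb]) (use x0 x3 x6 eta in auto)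
  have n2: "\<epsilon> / ((2*\<eta>) * (5*\<eta>)) = \<eta>/1280" "\<epsilon> / ((2*\<eta>) * (2*\<eta>)) = \<eta>/512"
    "\<epsilon> / ((5*\<eta>) * (2*\<eta>)) = \<eta>/1280"
    using eta by (simp_all add: \<epsilon>_def field_simps power3_eq_cube)
  have G2: "\<bar>gk t 2 \<xi>2\<bar> \<le> 1/100"
  proof -
    have "\<bar>gk t 2 \<xi>2\<bar> = 2 * \<bar>gk t 0 x0 / q2 x3 x6 x0 + gk t 0 x3 / q2 x0 x6 x3 + gk t 0 x6 / q2 x0 x3 x6\<bar>"
      by (simp only: xi2(3) abs_mult abs_numeral)
    then show ?thesis using abs3[OF b20 b21 b22] unfolding n2 by (rule scale_bd) (use eta in simp_all)
  qed
  have "x0 < x6" using x0 x6 eta by linarith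
  obtain \<xi>1 where xi1: "x0 < \<xi>1" "\<xi>1 < x6" "gk t 0 x6 - gk t 0 x0 = (x6 - x0) * gk t 1 \<xi>1"
    using MVT2[OF \<open>x0 < x6\<close>, of "gk t 0" "gk t 1"] gk_deriv by (auto simp: numeral_eq_Suc)
  have G1: "\<bar>gk t 1 \<xi>1\<bar> \<le> 1/100"
  proof -
    have "\<bar>gk t 1 \<xi>1\<bar> * (5*\<eta>) \<le> \<bar>gk t 1 \<xi>1\<bar> * (x6 - x0)"
      using x0 x6 by (intro mult_left_mono) auto
    also have "\<dots> = \<bar>gk t 0 x6 - gk t 0 x0\<bar>" using xi1(3) \<open>x0 < x6\<close> by (simp add: abs_mult)
    also have "\<dots> \<le> 2 * \<epsilon>" using x0(3) x6(3) by linarith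
    also have "\<dots> \<le> (5*\<eta>) * (1/100)"
    proof -
      have "\<eta>^2 \<le> 1" using eta by (simp add: power_le_one)
      then have "\<eta> * \<eta>^2 \<le> \<eta> * 1" using eta by (intro mult_left_mono) auto
      then show ?thesis unfolding \<epsilon>_def using eta by (simp add: power3_eq_cube power2_eq_square)
    qed
    finally show ?thesis using eta by simp
  qed
  have G0: "\<bar>gk t 0 x0\<bar> \<le> 1/100"
  proof -
    have "\<eta>^2 \<le> 1" using eta by (simp add: power_le_one)
    then have "\<eta> * \<eta>^2 \<le> 1 * 1" using eta by (intro mult_mono) auto
    then show ?thesis using x0(3) unfolding \<epsilon>_def by (simp add: power3_eq_cube power2_eq_square)
  qed
  define A where "A = ac t (of_real a)"
  define B where "B = bc t (of_real a)"
  define u where "u = A * exp (\<i> * of_real a)"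
  define v where "v = B * exp (2 * \<i> * of_real a)"
  have d7: "7 * \<eta> \<le> 7/2048" using eta by simp
  have T0: "\<bar>Re u + Re v\<bar> \<le> 1/100 + 1/12 + 3 * (7/2048)"
  proof -
    have "\<bar>Re (\<i>^0 * A * exp (\<i> * of_real a) + (2*\<i>)^0 * B * exp (2 * \<i> * of_real a))\<bar>
      \<le> 1/100 + fact 0 / 12 + (1 + 2^(0+1)) * (x0 - a)"
      unfolding A_def B_def by (rule transfer) (use G0 x0 eta in auto)
    moreover have "(1 + 2^(0+1)) * (x0 - a) \<le> 3 * (7/2048)" using x0 d7 by simp
    ultimately show ?thesis by (simp add: u_def v_def)
  qed
  have T1: "\<bar>- Im u - 2 * Im v\<bar> \<le> 1/100 + 1/12 + 5 * (7/2048)"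
  proof -
    have "\<bar>Re (\<i>^1 * A * exp (\<i> * of_real a) + (2*\<i>)^1 * B * exp (2 * \<i> * of_real a))\<bar>
      \<le> 1/100 + fact 1 / 12 + (1 + 2^(1+1)) * (\<xi>1 - a)"
      unfolding A_def B_def by (rule transfer) (use G1 xi1 x0 x6 eta in auto)
    moreover have "(1 + 2^(1+1)) * (\<xi>1 - a) \<le> 5 * (7/2048)" using xi1 x0 x6 d7 by simp
    moreover have "Re (\<i>^1 * A * exp (\<i> * of_real a) + (2*\<i>)^1 * B * exp (2 * \<i> * of_real a)) = - Im u - 2 * Im v"
      by (simp add: u_def v_def)
    ultimately show ?thesis by simp
  qed
  have T2: "\<bar>- Re u - 4 * Re v\<bar> \<le> 1/100 + 2/12 + 9 * (7/2048)"
  proof -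
    have "\<bar>Re (\<i>^2 * A * exp (\<i> * of_real a) + (2*\<i>)^2 * B * exp (2 * \<i> * of_real a))\<bar>
      \<le> 1/100 + fact 2 / 12 + (1 + 2^(2+1)) * (\<xi>2 - a)"
      unfolding A_def B_def by (rule transfer) (use G2 xi2 x0 x6 eta in auto)
    moreover have "(1 + 2^(2+1)) * (\<xi>2 - a) \<le> 9 * (7/2048)" using xi2 x0 x6 d7 by simp
    moreover have "Re (\<i>^2 * A * exp (\<i> * of_real a) + (2*\<i>)^2 * B * exp (2 * \<i> * of_real a)) = - Re u - 4 * Re v"
      by (simp add: u_def v_def power2_eq_square)
    ultimately show ?thesis by simp
  qed
  have T3: "\<bar>Im u + 8 * Im v\<bar> \<le> 3/80 + 6/12 + 17 * (7/2048)"
  proof -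
    have "\<bar>Re (\<i>^3 * A * exp (\<i> * of_real a) + (2*\<i>)^3 * B * exp (2 * \<i> * of_real a))\<bar>
      \<le> 3/80 + fact 3 / 12 + (1 + 2^(3+1)) * (\<xi>3 - a)"
      unfolding A_def B_def by (rule transfer) (use G3 xi3 x0 x6 eta in auto)
    moreover have "(1 + 2^(3+1)) * (\<xi>3 - a) \<le> 17 * (7/2048)" using xi3 x0 x6 d7 by simp
    moreover have "Re (\<i>^3 * A * exp (\<i> * of_real a) + (2*\<i>)^3 * B * exp (2 * \<i> * of_real a)) = Im u + 8 * Im v"
      by (simp add: u_def v_def power3_eq_cube)
    moreover have "(fact 3 :: real) = 6" by (simp add: eval_nat_numeral)
    ultimately show ?thesis by simp
  qed
  have uv: "(Re u)^2 + (Im u)^2 + (Re v)^2 + (Im v)^2 = 1"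
  proof -
    have "(cmod A)^2 + (cmod B)^2 = 1" unfolding A_def B_def by (rule ab_unit) simp
    moreover have "cmod u = cmod A" "cmod v = cmod B"
      unfolding u_def v_def by (simp_all add: norm_mult)
    ultimately have "(cmod u)^2 + (cmod v)^2 = 1" by simp
    then show ?thesis by (simp only: cmod_power2 add.assoc)
  qed
  show False
  proof (rule final_alg[OF uv])
    show "\<bar>Re u + Re v\<bar> \<le> 1/8" by (rule order_trans[OF T0]) simp
    show "\<bar>- Im u - 2 * Im v\<bar> \<le> 1/8" by (rule order_trans[OF T1]) simp
    show "\<bar>- Re u - 4 * Re v\<bar> \<le> 1/4" by (rule order_trans[OF T2]) simp
    show "\<bar>Im u + 8 * Im v\<bar> \<le> 2/3" by (rule order_trans[OF T3]) simp
  qed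
qed



lemma ivl_between:
  fixes J :: "real set"
  assumes lr: "l < r" and sub1: "{l<..<r} \<subseteq> J" and sub2: "J \<subseteq> {l..r}"
  shows "Sup J = r" "Inf J = l"
proof -
  have ne: "J \<noteq> {}" using sub1 lr by (metis dense empty_iff greaterThanLessThan_iff subsetD)
  have ba: "bdd_above J" using sub2 by (meson bdd_above_Icc bdd_above_mono)
  have bb: "bdd_below J" using sub2 by (meson bdd_below_Icc bdd_below_mono)
  have s1: "Sup J \<le> r" using sub2 ne by (intro cSup_least) auto
  show "Sup J = r"
  proof (rule ccontr)
    assume "Sup J \<noteq> r"
    then have "Sup J < r" using s1 by simp
    define y where "y = (max (Sup J) l + r) / 2"
    have "y \<in> J" using sub1 \<open>Sup J < r\<close> lr unfolding y_def by (auto simp: subset_iff)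
    then have "y \<le> Sup J" using ba by (rule cSup_upper)
    then show False using \<open>Sup J < r\<close> lr unfolding y_def by simp
  qed
  have i1: "l \<le> Inf J" using sub2 ne by (intro cInf_greatest) auto
  show "Inf J = l"
  proof (rule ccontr)
    assume "Inf J \<noteq> l"
    then have "l < Inf J" using i1 by simp
    define y where "y = (min (Inf J) r + l) / 2"
    have "y \<in> J" using sub1 \<open>l < Inf J\<close> lr unfolding y_def by (auto simp: subset_iff)
    then have "Inf J \<le> y" using bb by (rule cInf_lower)
    then show False using \<open>l < Inf J\<close> lr unfolding y_def by simp
  qed
qed

theorem lemma3p4:
  fixes t :: nat and \<eta> :: real
  assumes "odd t" and "t > 0" and "0 < \<eta>" and "\<eta> < 2 powr (-11)"
  shows "(\<forall>I :: real set. is_interval I \<and> I \<noteq> {} \<and> bounded I \<and> ivl_length I = 7 * \<eta> \<longrightarrow>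
            (\<exists>J. J \<subseteq> I \<and> is_interval J \<and> J \<noteq> {} \<and> bounded J \<and> ivl_length J = \<eta> \<and>
                 (\<forall>x\<in>J. \<bar>Re (H t x)\<bar> \<ge> \<eta> ^ 3 / 2 ^ 7)))
       \<and> (\<forall>a :: real. \<exists>j :: nat. j \<le> 6 \<and>
            (\<forall>x\<in>{a + real j * \<eta> .. a + (real j + 1) * \<eta>}. \<bar>Re (H t x)\<bar> \<ge> \<eta> ^ 3 / 2 ^ 7))"
proof -
  have eta: "0 < \<eta>" "\<eta> \<le> 1/2048"
    using assms(3,4) by (simp_all add: powr_minus_divide powr_realpow)
  have P2: "\<exists>j :: nat. j \<le> 6 \<and>
            (\<forall>x\<in>{a + real j * \<eta> .. a + (real j + 1) * \<eta>}. \<bar>Re (H t x)\<bar> \<ge> \<eta> ^ 3 / 2 ^ 7)" for a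
  proof (rule ccontr)
    assume neg: "\<not> ?thesis"
    then have "\<forall>j::nat. j \<le> 6 \<longrightarrow> (\<exists>x\<in>{a + real j * \<eta> .. a + (real j + 1) * \<eta>}. \<bar>Re (H t x)\<bar> < \<eta>^3/2^7)"
    proof (intro allI impI)
      fix j :: nat assume "j \<le> 6"
      then have "\<not> (\<forall>x\<in>{a + real j * \<eta> .. a + (real j + 1) * \<eta>}. \<bar>Re (H t x)\<bar> \<ge> \<eta> ^ 3 / 2 ^ 7)"
        using neg by blast
      then show "\<exists>x\<in>{a + real j * \<eta> .. a + (real j + 1) * \<eta>}. \<bar>Re (H t x)\<bar> < \<eta>^3/2^7"
        by (meson not_le)
    qed
    then show False by (rule core[OF eta])
  qed
  have P1: "\<exists>J. J \<subseteq> I \<and> is_interval J \<and> J \<noteq> {} \<and> bounded J \<and> ivl_length J = \<eta> \<and>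
                 (\<forall>x\<in>J. \<bar>Re (H t x)\<bar> \<ge> \<eta> ^ 3 / 2 ^ 7)"
    if I: "is_interval I" "I \<noteq> {}" "bounded I" "ivl_length I = 7 * \<eta>" for I :: "real set"
  proof -
    define a where "a = Inf I"
    have ba: "bdd_above I" and bb: "bdd_below I" using I(3) by (auto intro: bounded_imp_bdd_above bounded_imp_bdd_below)
    have supI: "Sup I = a + 7 * \<eta>" using I(4) unfolding ivl_length_def a_def by simp
    have sub2: "I \<subseteq> {a .. a + 7*\<eta>}"
      using cInf_lower[OF _ bb] cSup_upper[OF _ ba] supI unfolding a_def by auto
    have sub1: "{a<..<a + 7*\<eta>} \<subseteq> I"
    proof
      fix x assume x: "x \<in> {a<..<a + 7*\<eta>}"
      then have "Inf I < x" unfolding a_def by simp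
      then obtain y where y: "y \<in> I" "y < x" using cInf_less_iff[OF I(2) bb] by auto
      have "x < Sup I" using x supI by simp
      then obtain z where z: "z \<in> I" "x < z" using less_cSup_iff[OF I(2) ba] by auto
      show "x \<in> I" using I(1) y z unfolding is_interval_1 by (meson less_imp_le)
    qed
    obtain j :: nat where j: "j \<le> 6" "\<forall>x\<in>{a + real j * \<eta> .. a + (real j + 1) * \<eta>}. \<bar>Re (H t x)\<bar> \<ge> \<eta> ^ 3 / 2 ^ 7"
      using P2 by blast
    define J where "J = {a + real j * \<eta> .. a + (real j + 1) * \<eta>} \<inter> I"
    have lr: "a + real j * \<eta> < a + (real j + 1) * \<eta>" using eta by (simp add: algebra_simps)
    have jr: "real j \<le> 6" using j by simp
    have s1: "{a + real j * \<eta> <..< a + (real j + 1) * \<eta>} \<subseteq> J"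
    proof -
      have "a \<le> a + real j * \<eta>" using eta by simp
      moreover have "a + (real j + 1) * \<eta> \<le> a + 7 * \<eta>" using jr eta by (simp add: algebra_simps)
      ultimately have "{a + real j * \<eta> <..< a + (real j + 1) * \<eta>} \<subseteq> {a<..<a + 7*\<eta>}" by auto
      then show ?thesis using sub1 unfolding J_def by auto
    qed
    have s2: "J \<subseteq> {a + real j * \<eta> .. a + (real j + 1) * \<eta>}" unfolding J_def by auto
    note sj = ivl_between[OF lr s1 s2]
    have "J \<noteq> {}" using s1 lr by (metis dense empty_iff greaterThanLessThan_iff subsetD)
    moreover have "is_interval J" unfolding J_def by (intro is_interval_Int is_interval_cc I(1))
    moreover have "bounded J" unfolding J_def by (intro bounded_Int) auto
    moreover have "ivl_length J = \<eta>" unfolding ivl_length_def sj by (simp add: algebra_simps)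
    moreover have "J \<subseteq> I" unfolding J_def by auto
    moreover have "\<forall>x\<in>J. \<bar>Re (H t x)\<bar> \<ge> \<eta> ^ 3 / 2 ^ 7" using j(2) s2 by auto
    ultimately show ?thesis by blast
  qed
  show ?thesis using P1 P2 by blast
qed

end
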